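(* Let $n\in\mathbb N$, let $K_1,\dots,K_n$ be singular kernel functions and let $J$ be an arbitrary $n$-field function. Let $\mathbf y\in\overline S$ and let $j\in\{0,1,\dots,n\}$ be such that $m_j(\mathbf y)\ne-\infty$. Then there exist $\delta>0$ and a closed interval $W\subseteq[0,1]$ with the following properties for every $\mathbf x\in\overline S$ with $\|\mathbf x-\mathbf y\|\le\delta$: (i) $W\subseteq I_j(\mathbf x)$, and every point of $W$ has distance at least $\delta$ from the set $\{x_1,\dots,x_n\}$; (ii) $m_j(\mathbf x)=\sup_{t\in W}F(\mathbf x,t)$.
   Context: A kernel function is a function $K:(-1,0)\cup(0,1)\to\mathbb R$ that is concave on $(-1,0)$ and concave on $(0,1)$ and satisfies $\lim_{t\downarrow0}K(t)=\lim_{t\uparrow0}K(t)$. It is extended to $[-1,1]$ with values in $[-\infty,\infty)$ by its one-sided limits at $-1,0,1$. A kernel function is singular if $K(0)=-\infty$. An $n$-field function is a function $J:[0,1]\to[-\infty,\infty)$ that is bounded above and whose set of finite values has total weight strictly greater than $n$. Here the points $0$ and $1$ each have weight $1/2$ and every point of $(0,1)$ has weight $1$. $\overline S=\{\mathbf y\in\mathbb R^n:0\le y_1\le\dots\le y_n\le1\}$. $F(\mathbf y,t)=J(t)+\sum_{i=1}^nK_i(t-y_i)$, with the convention $a+(-\infty)=-\infty$. Set $y_0:=0$ and $y_{n+1}:=1$. For $j=0,\dots,n$ let $I_j(\mathbf y)=[y_j,y_{j+1}]$ and $m_j(\mathbf y)=\sup_{t\in I_j(\mathbf y)}F(\mathbf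 y,t)$. $\|\mathbf v\|=\max_i|v_i|$. *)

theory Defs
  imports "HOL-Analysis.Analysis" "HOL-Library.Extended_Real"
begin

text \<open>A kernel function, already extended to [-1,1] by its one-sided limits,
  with values in the extended reals (only values in [-infinity,infinity) occur).
  It is real-valued and concave on (-1,0) and on (0,1), and its values at -1, 0, 1
  are the corresponding one-sided limits (the two one-sided limits at 0 agree).\<close>
definition kernel_function :: "(real \<Rightarrow> ereal) \<Rightarrow> bool" where
  "kernel_function K \<longleftrightarrow>
     (\<forall>t\<in>{-1<..<0} \<union> {0<..<1}. K t \<noteq> \<infinity> \<and> K t \<noteq> -\<infinity>) \<and>
     concave_on {-1<..<0} (\<lambda>t. real_of_ereal (K t)) \<and>
     concave_on {0<..<1} (\<lambda>t. real_of_ereal (K t)) \<and>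
     (K \<longlongrightarrow> K 0) (at_left 0) \<and>
     (K \<longlongrightarrow> K 0) (at_right 0) \<and>
     (K \<longlongrightarrow> K (-1)) (at_right (-1)) \<and>
     (K \<longlongrightarrow> K 1) (at_left 1)"

definition singular_kernel :: "(real \<Rightarrow> ereal) \<Rightarrow> bool" where
  "singular_kernel K \<longleftrightarrow> kernel_function K \<and> K 0 = -\<infinity>"

definition weight :: "real set \<Rightarrow> ereal" where
  "weight A = (if finite (A \<inter> {0<..<1})
      then ereal (real (card (A \<inter> {0<..<1}))
                  + (if 0 \<in> A then 1/2 else 0) + (if 1 \<in> A then 1/2 else 0))
      else \<infinity>)"

definition n_field_function :: "nat \<Rightarrow> (real \<Rightarrow> ereal) \<Rightarrow> bool" where
  "n_field_function n J \<longleftrightarrow>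
     (\<forall>t\<in>{0..1}. J t \<noteq> \<infinity>) \<and>
     (\<exists>M::real. \<forall>t\<in>{0..1}. J t \<le> ereal M) \<and>
     weight {t\<in>{0..1}. J t \<noteq> -\<infinity>} > ereal (real n)"

text \<open>Vectors y = (y_1,...,y_n) are functions nat => real (indices 1..n);
  yext adds the conventions y_0 = 0, y_(n+1) = 1.\<close>
definition yext :: "nat \<Rightarrow> (nat \<Rightarrow> real) \<Rightarrow> nat \<Rightarrow> real" where
  "yext n y j = (if j = 0 then 0 else if j = Suc n then 1 else y j)"

definition Sbar :: "nat \<Rightarrow> (nat \<Rightarrow> real) set" where
  "Sbar n = {y. \<forall>j\<le>n. yext n y j \<le> yext n y (Suc j)}"

definition Ffun :: "nat \<Rightarrow> (real \<Rightarrow> ereal) \<Rightarrow> (nat \<Rightarrow> real \<Rightarrow> ereal)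
                    \<Rightarrow> (nat \<Rightarrow> real) \<Rightarrow> real \<Rightarrow> ereal" where
  "Ffun n J K y t = J t + (\<Sum>i\<in>{1..n}. K i (t - y i))"

definition Iint :: "nat \<Rightarrow> (nat \<Rightarrow> real) \<Rightarrow> nat \<Rightarrow> real set" where
  "Iint n y j = {yext n y j .. yext n y (Suc j)}"

definition mval :: "nat \<Rightarrow> (real \<Rightarrow> ereal) \<Rightarrow> (nat \<Rightarrow> real \<Rightarrow> ereal)
                    \<Rightarrow> (nat \<Rightarrow> real) \<Rightarrow> nat \<Rightarrow> ereal" where
  "mval n J K y j = (SUP t\<in>Iint n y j. Ffun n J K y t)"

end

theory Submission
  imports Defs
begin

lemma concave_bdd:
  fixes f :: "real \<Rightarrow> real"
  assumes cf: "concave_on {a<..<b} f" and ab: "a < b"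
  shows "\<exists>R. \<forall>t\<in>{a<..<b}. f t \<le> R"
proof -
  define p1 where "p1 = a + (b-a)/4"
  define p2 where "p2 = a + (b-a)/2"
  define p3 where "p3 = a + 3*(b-a)/4"
  have P: "p1 \<in> {a<..<b}" "p2 \<in> {a<..<b}" "p3 \<in> {a<..<b}" using ab by (auto simp: p1_def p2_def p3_def field_simps)
  define X where "X = \<bar>f p1\<bar> + \<bar>f p2\<bar> + \<bar>f p3\<bar>"
  have key: "f t \<le> 3 * X" if t: "t \<in> {a<..<b}" for t
  proof (cases "t \<ge> p2")
    case True
    define m where "m = (p2 - p1) / (t - p1)"
    have tp: "t - p1 > 0" using True ab by (simp add: p1_def p2_def field_simps)
    have m0: "m \<ge> 1/3" using tp t ab by (simp add: m_def p1_def p2_def field_simps)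
    have m1: "m \<le> 1" using tp True by (simp add: m_def)
    have "m * (t - p1) = p2 - p1" using tp by (simp add: m_def)
    hence eq: "(1 - m) *\<^sub>R p1 + m *\<^sub>R t = p2" by (simp add: algebra_simps)
    have "f ((1 - m) *\<^sub>R p1 + m *\<^sub>R t) \<ge> (1 - m) * f p1 + m * f t"
      using concave_onD[OF cf, of m p1 t] m0 m1 P t by auto
    hence h: "m * f t \<le> f p2 - (1 - m) * f p1" using eq by simp
    have "(1 - m) * f p1 \<ge> - \<bar>f p1\<bar>"
    proof -
      have "\<bar>(1 - m) * f p1\<bar> \<le> \<bar>f p1\<bar>" unfolding abs_mult
        using m1 m0 by (intro mult_left_le_one_le) auto
      thus ?thesis by linarith
    qed
    hence "m * f t \<le> X" using h unfolding X_def by linarith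
    show ?thesis
    proof (cases "f t \<le> 0")
      case False
      hence "(1/3) * f t \<le> m * f t" using m0 by (intro mult_right_mono) auto
      thus ?thesis using \<open>m * f t \<le> X\<close> by linarith
    qed (auto simp: X_def)
  next
    case False
    define m where "m = (p2 - t) / (p3 - t)"
    have tp: "p3 - t > 0" using False ab by (simp add: p3_def p2_def field_simps)
    have m0: "1 - m \<ge> 1/3" using tp t ab by (simp add: m_def p3_def p2_def field_simps)
    have m1: "m \<ge> 0" "m \<le> 1" using tp False ab by (auto simp add: m_def p2_def p3_def field_simps)
    have "m * (p3 - t) = p2 - t" using tp by (simp add: m_def)
    hence eq: "(1 - m) *\<^sub>R t + m *\<^sub>R p3 = p2" by (simp add: algebra_simps)
    have "f ((1 - m) *\<^sub>R t + m *\<^sub>R p3) \<ge> (1 - m) * f t + m * f p3"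
      using concave_onD[OF cf, of m t p3] m0 m1 P t by auto
    hence h: "(1 - m) * f t \<le> f p2 - m * f p3" using eq by simp
    have "m * f p3 \<ge> - \<bar>f p3\<bar>"
    proof -
      have "\<bar>m * f p3\<bar> \<le> \<bar>f p3\<bar>" unfolding abs_mult
        using m1 by (intro mult_left_le_one_le) auto
      thus ?thesis by linarith
    qed
    hence "(1 - m) * f t \<le> X" using h unfolding X_def by linarith
    show ?thesis
    proof (cases "f t \<le> 0")
      case False
      hence "(1/3) * f t \<le> (1 - m) * f t" using m0 by (intro mult_right_mono) auto
      thus ?thesis using \<open>(1 - m) * f t \<le> X\<close> by linarith
    qed (auto simp: X_def)
  qed
  thus ?thesis by blast
qed

lemma open_cont:
  fixes K :: "real \<Rightarrow> ereal"
  assumes fin: "\<forall>t\<in>{a<..<b}. K t \<noteq> \<infinity> \<and> K t \<noteq> -\<infinity>"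
    and cf: "concave_on {a<..<b} (\<lambda>t. real_of_ereal (K t))"
    and s: "s \<in> {a<..<b}"
  shows "(K \<longlongrightarrow> K s) (at s)"
proof -
  define f where "f = (\<lambda>t. real_of_ereal (K t))"
  have "convex_on {a<..<b} (\<lambda>t. - f t)" using cf by (simp add: concave_on_def f_def)
  hence "continuous_on {a<..<b} (\<lambda>t. - f t)" by (intro convex_on_continuous) auto
  from continuous_on_minus[OF this] have "continuous_on {a<..<b} f" by simp
  hence "isCont f s" using s by (simp add: continuous_on_eq_continuous_at)
  hence "(f \<longlongrightarrow> f s) (at s)" by (simp add: isCont_def)
  hence L: "((\<lambda>t. ereal (f t)) \<longlongrightarrow> ereal (f s)) (at s)" by (rule tendsto_ereal)
  have E: "\<And>t. t \<in> {a<..<b} \<Longrightarrow> ereal (f t) = K t"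
  proof -
    fix t assume "t \<in> {a<..<b}"
    thus "ereal (f t) = K t" using fin unfolding f_def by (cases "K t") auto
  qed
  have "eventually (\<lambda>t. t \<in> {a<..<b} - {s}) (at s)" by (rule eventually_at_in_open) (use s in auto)
  hence ev: "eventually (\<lambda>t. ereal (f t) = K t) (at s)" by (rule eventually_mono) (use E in auto)
  have "(K \<longlongrightarrow> ereal (f s)) (at s)" using tendsto_cong[OF ev] L by blast
  thus ?thesis using E[OF s] by simp
qed

lemma kernel_cont:
  assumes k: "kernel_function K" and s: "s \<in> {-1..1}"
  shows "(K \<longlongrightarrow> K s) (at s within {-1..1})"
proof -
  note kd = k[unfolded kernel_function_def]
  consider "s = -1" | "s \<in> {-1<..<0}" | "s = 0" | "s \<in> {0<..<1}" | "s = 1" using s by force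
  thus ?thesis
  proof cases
    case 1
    thus ?thesis using kd by (simp add: at_within_Icc_at_right)
  next
    case 2
    hence "(K \<longlongrightarrow> K s) (at s)" using kd by (intro open_cont[of "-1" 0]) auto
    thus ?thesis by (rule tendsto_mono[rotated]) (simp add: at_le)
  next
    case 3
    hence "(K \<longlongrightarrow> K s) (at s)" using kd by (intro filterlim_split_at) auto
    thus ?thesis by (rule tendsto_mono[rotated]) (simp add: at_le)
  next
    case 4
    hence "(K \<longlongrightarrow> K s) (at s)" using kd by (intro open_cont[of 0 1]) auto
    thus ?thesis by (rule tendsto_mono[rotated]) (simp add: at_le)
  next
    case 5
    thus ?thesis using kd by (simp add: at_within_Icc_at_left)
  qed
qed

lemma kernel_bdd:
  assumes k: "kernel_function K"
  shows "\<exists>B. \<forall>s\<in>{-1..1}. K s \<le> ereal B"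
proof -
  note kd = k[unfolded kernel_function_def]
  define f where "f = (\<lambda>t. real_of_ereal (K t))"
  obtain R1 where R1: "\<forall>t\<in>{-1<..<0}. f t \<le> R1" using concave_bdd[of "-1" 0 f] kd f_def by auto
  obtain R2 where R2: "\<forall>t\<in>{0<..<1}. f t \<le> R2" using concave_bdd[of 0 1 f] kd f_def by auto
  define B where "B = max R1 R2"
  have op: "K t \<le> ereal B" if "t \<in> {-1<..<0} \<union> {0<..<1}" for t
  proof -
    have "K t = ereal (f t)" using kd that unfolding f_def by (cases "K t") auto
    moreover have "f t \<le> R1 \<or> f t \<le> R2" using that R1 R2 by blast
    hence "f t \<le> B" unfolding B_def by (auto simp: le_max_iff_disj)
    ultimately show ?thesis by simp
  qed
  have m1: "K (-1) \<le> ereal B"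
  proof (rule tendsto_upperbound[of K _ "at_right (-1)"])
    show "(K \<longlongrightarrow> K (-1)) (at_right (-1))" using kd by simp
    show "\<forall>\<^sub>F i in at_right (-1). K i \<le> ereal B"
      unfolding eventually_at_right_field by (rule exI[of _ 0]) (intro conjI allI impI op; simp)
  qed simp
  have p1: "K 1 \<le> ereal B"
  proof (rule tendsto_upperbound[of K _ "at_left 1"])
    show "(K \<longlongrightarrow> K 1) (at_left 1)" using kd by simp
    show "\<forall>\<^sub>F i in at_left 1. K i \<le> ereal B"
      unfolding eventually_at_left_field by (rule exI[of _ 0]) (intro conjI allI impI op; simp)
  qed simp
  have z: "K 0 \<le> ereal B"
  proof (rule tendsto_upperbound[of K _ "at_right 0"])
    show "(K \<longlongrightarrow> K 0) (at_right 0)" using kd by simp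
    show "\<forall>\<^sub>F i in at_right 0. K i \<le> ereal B"
      unfolding eventually_at_right_field by (rule exI[of _ 1]) (intro conjI allI impI op; simp)
  qed simp
  have "\<forall>s\<in>{-1..1}. K s \<le> ereal B"
  proof
    fix s :: real assume "s \<in> {-1..1}"
    then consider "s = -1" | "s = 0" | "s = 1" | "s \<in> {-1<..<0} \<union> {0<..<1}" by force
    thus "K s \<le> ereal B" by cases (use m1 p1 z op in auto)
  qed
  thus ?thesis by blast
qed

lemma cont_lower:
  assumes k: "kernel_function K" and s: "s \<in> {-1..1}" and l: "ereal l < K s"
  shows "\<exists>d>0. \<forall>u\<in>{-1..1}. \<bar>u - s\<bar> < d \<longrightarrow> ereal l < K u"
proof -
  have "eventually (\<lambda>u. ereal l < K u) (at s within {-1..1})"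
    using order_tendstoD(1)[OF kernel_cont[OF k s] l] .
  then obtain d where d: "d > 0" "\<forall>u\<in>{-1..1}. u \<noteq> s \<and> dist u s < d \<longrightarrow> ereal l < K u"
    unfolding eventually_at by blast
  show ?thesis
    by (rule exI[of _ d]) (use d l in \<open>auto simp: dist_real_def\<close>)
qed

lemma cont_upper:
  assumes k: "kernel_function K" and s: "s \<in> {-1..1}" and l: "K s < ereal l"
  shows "\<exists>d>0. \<forall>u\<in>{-1..1}. \<bar>u - s\<bar> < d \<longrightarrow> K u < ereal l"
proof -
  have "eventually (\<lambda>u. K u < ereal l) (at s within {-1..1})"
    using order_tendstoD(2)[OF kernel_cont[OF k s] l] .
  then obtain d where d: "d > 0" "\<forall>u\<in>{-1..1}. u \<noteq> s \<and> dist u s < d \<longrightarrow> K u < ereal l"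
    unfolding eventually_at by blast
  show ?thesis
    by (rule exI[of _ d]) (use d l in \<open>auto simp: dist_real_def\<close>)
qed

lemma fin_delta:
  assumes "finite A"
  shows "(\<forall>i\<in>A. \<exists>d>0. \<forall>u::real. \<bar>u\<bar> < d \<longrightarrow> Q i u) \<Longrightarrow> \<exists>d>0. \<forall>i\<in>A. \<forall>u. \<bar>u\<bar> < d \<longrightarrow> Q i u"
  using assms
proof (induction A rule: finite_induct)
  case empty
  then show ?case by (auto intro: exI[of _ 1])
next
  case (insert x F)
  then obtain d1 where d1: "d1 > 0" "\<forall>i\<in>F. \<forall>u. \<bar>u\<bar> < d1 \<longrightarrow> Q i u" by auto
  from insert obtain d2 where d2: "d2 > 0" "\<forall>u. \<bar>u\<bar> < d2 \<longrightarrow> Q x u" by auto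
  show ?case by (rule exI[of _ "min d1 d2"]) (use d1 d2 in auto)
qed

lemma sbar_mono:
  assumes x: "x \<in> Sbar n"
  shows "i \<le> k \<Longrightarrow> k \<le> Suc n \<Longrightarrow> yext n x i \<le> yext n x k"
proof (induction k)
  case 0
  then show ?case by simp
next
  case (Suc k)
  show ?case
  proof (cases "i = Suc k")
    case False
    hence "yext n x i \<le> yext n x k" using Suc by auto
    moreover have "yext n x k \<le> yext n x (Suc k)" using x Suc.prems unfolding Sbar_def by auto
    ultimately show ?thesis by linarith
  qed simp
qed

lemma sbar_range:
  assumes x: "x \<in> Sbar n" and i: "i \<in> {1..n}"
  shows "0 \<le> x i" "x i \<le> 1"
proof -
  have "yext n x 0 \<le> yext n x i" "yext n x i \<le> yext n x (Suc n)"
    using sbar_mono[OF x] i by auto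
  thus "0 \<le> x i" "x i \<le> 1" using i by (auto simp: yext_def split: if_splits)
qed

lemma F_ub:
  assumes KB: "\<forall>i\<in>{1..n}. \<forall>s\<in>{-1..1}. K i s \<le> ereal B" and B0: "B \<ge> 0"
    and x: "\<forall>i\<in>{1..n}. x i \<in> {0..1}" and t: "t \<in> {0..1}" and k: "k \<in> {1..n}"
    and J: "J t \<le> ereal MJ"
  shows "Ffun n J K x t \<le> ereal (MJ + real n * B) + K k (t - x k)"
proof -
  have S: "(\<Sum>i\<in>{1..n}. K i (t - x i)) = K k (t - x k) + (\<Sum>i\<in>{1..n}-{k}. K i (t - x i))"
    using k by (simp add: sum.remove)
  have "(\<Sum>i\<in>{1..n}-{k}. K i (t - x i)) \<le> (\<Sum>i\<in>{1..n}-{k}. ereal B)"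
  proof (intro sum_mono)
    fix i assume i: "i \<in> {1..n}-{k}"
    hence "x i \<in> {0..1}" using x by auto
    hence "t - x i \<in> {-1..1}" using t by auto
    thus "K i (t - x i) \<le> ereal B" using KB i by auto
  qed
  also have "\<dots> = ereal (real (card ({1..n}-{k})) * B)" by simp
  also have "\<dots> \<le> ereal (real n * B)"
    using B0 k by (auto intro!: mult_right_mono)
  finally have R: "(\<Sum>i\<in>{1..n}-{k}. K i (t - x i)) \<le> ereal (real n * B)" .
  have "Ffun n J K x t = J t + (K k (t - x k) + (\<Sum>i\<in>{1..n}-{k}. K i (t - x i)))"
    unfolding Ffun_def S ..
  also have "\<dots> \<le> ereal MJ + (K k (t - x k) + ereal (real n * B))"
    using J R by (intro add_mono) auto
  also have "\<dots> = (ereal MJ + ereal (real n * B)) + K k (t - x k)"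
    by (simp only: ac_simps)
  also have "\<dots> = ereal (MJ + real n * B) + K k (t - x k)"
    by simp
  finally show ?thesis .
qed

lemma F_ub0:
  assumes KB: "\<forall>i\<in>{1..n}. \<forall>s\<in>{-1..1}. K i s \<le> ereal B"
    and x: "\<forall>i\<in>{1..n}. x i \<in> {0..1}" and t: "t \<in> {0..1}"
  shows "Ffun n J K x t \<le> J t + ereal (real n * B)"
proof -
  have "(\<Sum>i\<in>{1..n}. K i (t - x i)) \<le> (\<Sum>i\<in>{1..n}. ereal B)"
  proof (intro sum_mono)
    fix i assume i: "i \<in> {1..n}"
    hence "x i \<in> {0..1}" using x by auto
    hence "t - x i \<in> {-1..1}" using t by auto
    thus "K i (t - x i) \<le> ereal B" using KB i by auto
  qed
  also have "\<dots> = ereal (real n * B)" by simp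
  finally show ?thesis unfolding Ffun_def by (intro add_left_mono)
qed

lemma F_lb:
  assumes "J t \<ge> ereal a" "\<forall>i\<in>{1..n}. K i (t - x i) \<ge> ereal (l i)"
  shows "Ffun n J K x t \<ge> ereal (a + (\<Sum>i\<in>{1..n}. l i))"
proof -
  have "(\<Sum>i\<in>{1..n}. ereal (l i)) \<le> (\<Sum>i\<in>{1..n}. K i (t - x i))"
    using assms by (intro sum_mono) auto
  hence "ereal (\<Sum>i\<in>{1..n}. l i) \<le> (\<Sum>i\<in>{1..n}. K i (t - x i))" by simp
  hence "ereal a + ereal (\<Sum>i\<in>{1..n}. l i) \<le> Ffun n J K x t"
    unfolding Ffun_def using assms(1) by (intro add_mono)
  thus ?thesis by simp
qed

theorem lemma3p2:
  fixes n :: nat and K :: "nat \<Rightarrow> real \<Rightarrow> ereal" and J :: "real \<Rightarrow> ereal"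
    and y :: "nat \<Rightarrow> real" and j :: nat
  assumes "\<forall>i\<in>{1..n}. singular_kernel (K i)"
    and "n_field_function n J"
    and "y \<in> Sbar n"
    and "j \<le> n"
    and "mval n J K y j \<noteq> -\<infinity>"
  shows "\<exists>\<delta>>0. \<exists>a b. a \<le> b \<and> {a..b} \<subseteq> {0..1} \<and>
           (\<forall>x\<in>Sbar n. (\<forall>i\<in>{1..n}. \<bar>x i - y i\<bar> \<le> \<delta>) \<longrightarrow>
              ({a..b} \<subseteq> Iint n x j \<and>
               (\<forall>t\<in>{a..b}. \<forall>i\<in>{1..n}. \<bar>t - x i\<bar> \<ge> \<delta>) \<and>
               mval n J K x j = (SUP t\<in>{a..b}. Ffun n J K x t)))"
proof -
  have kf: "\<And>i. i \<in> {1..n} \<Longrightarrow> kernel_function (K i)"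
    and k0: "\<And>i. i \<in> {1..n} \<Longrightarrow> K i 0 = -\<infinity>"
    using assms(1) unfolding singular_kernel_def by auto
  obtain MJ where MJ: "\<forall>t\<in>{0..1}. J t \<le> ereal MJ"
    using assms(2) unfolding n_field_function_def by auto
  have Jinf: "\<forall>t\<in>{0..1}. J t \<noteq> \<infinity>"
    using assms(2) unfolding n_field_function_def by auto
  obtain Bf where Bf: "\<forall>i\<in>{1..n}. \<forall>s\<in>{-1..1}. K i s \<le> ereal (Bf i)"
    using kernel_bdd[OF kf] by metis
  define B where "B = (\<Sum>i\<in>{1..n}. \<bar>Bf i\<bar>)"
  have B0: "B \<ge> 0" unfolding B_def by (intro sum_nonneg) auto
  have KB: "\<forall>i\<in>{1..n}. \<forall>s\<in>{-1..1}. K i s \<le> ereal B"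
  proof (intro ballI)
    fix i s assume i: "i \<in> {1..n}" and s: "s \<in> {-1..(1::real)}"
    have "Bf i \<le> \<bar>Bf i\<bar>" by simp
    also have "\<bar>Bf i\<bar> \<le> B" unfolding B_def using i
      by (intro member_le_sum) auto
    finally have "K i s \<le> ereal (Bf i)" "ereal (Bf i) \<le> ereal B" using Bf i s by auto
    thus "K i s \<le> ereal B" by (rule order_trans)
  qed
  define C where "C = MJ + real n * B"
  have yr: "\<forall>i\<in>{1..n}. y i \<in> {0..1}" using sbar_range[OF assms(3)] by auto
  have xr: "\<And>x. x \<in> Sbar n \<Longrightarrow> \<forall>i\<in>{1..n}. x i \<in> {0..1}" using sbar_range by auto
  have yext0: "\<And>x. yext n x 0 = 0" and yextn: "\<And>x. yext n x (Suc n) = 1"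
    and yexti: "\<And>x i. i \<in> {1..n} \<Longrightarrow> yext n x i = x i"
    by (auto simp: yext_def)
  obtain t0 where t0I: "t0 \<in> Iint n y j" and t0F: "Ffun n J K y t0 \<noteq> -\<infinity>"
  proof -
    have "\<exists>t\<in>Iint n y j. Ffun n J K y t \<noteq> -\<infinity>"
    proof (rule ccontr)
      assume "\<not> ?thesis"
      hence "mval n J K y j \<le> -\<infinity>" unfolding mval_def by (intro SUP_least) auto
      thus False using assms(5) by simp
    qed
    thus ?thesis using that by blast
  qed
  have Iy: "Iint n y j \<subseteq> {0..1}"
  proof -
    have "yext n y 0 \<le> yext n y j" "yext n y (Suc j) \<le> yext n y (Suc n)"
      using sbar_mono[OF assms(3)] assms(4) by auto
    thus ?thesis unfolding Iint_def yext0 yextn by auto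
  qed
  have t01: "t0 \<in> {0..1}" using t0I Iy by auto
  have Jt0: "J t0 \<noteq> -\<infinity>"
  proof
    assume "J t0 = -\<infinity>"
    hence "Ffun n J K y t0 \<le> -\<infinity>" using F_ub0[OF KB yr t01, of J] by simp
    thus False using t0F by simp
  qed
  obtain jt where jt: "J t0 = ereal jt" using Jt0 Jinf t01 by (cases "J t0") auto
  have Kt0: "K i (t0 - y i) \<noteq> -\<infinity>" if i: "i \<in> {1..n}" for i
  proof
    assume "K i (t0 - y i) = -\<infinity>"
    hence "Ffun n J K y t0 \<le> -\<infinity>" using F_ub[OF KB B0 yr t01 i, of J MJ] MJ t01 by simp
    thus False using t0F by simp
  qed
  have t0y: "t0 - y i \<noteq> 0" if i: "i \<in> {1..n}" for i
    using Kt0[OF i] k0[OF i] by auto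
  have t0yr: "t0 - y i \<in> {-1..1}" if i: "i \<in> {1..n}" for i
  proof -
    have "y i \<in> {0..1}" using yr i by blast
    thus ?thesis using t01 by auto
  qed
  have "\<forall>i\<in>{1..n}. \<exists>l. ereal l < K i (t0 - y i)"
  proof
    fix i assume i: "i \<in> {1..n}"
    show "\<exists>l. ereal l < K i (t0 - y i)"
      using Kt0[OF i] by (cases "K i (t0 - y i)") (auto intro: exI[of _ "real_of_ereal (K i (t0 - y i)) - 1"] exI[of _ 0])
  qed
  then obtain l where l: "\<forall>i\<in>{1..n}. ereal (l i) < K i (t0 - y i)" by metis
  have "\<forall>i\<in>{1..n}. \<exists>d>0. \<forall>u::real. \<bar>u\<bar> < d \<longrightarrow>
          (t0 - y i - u \<in> {-1..1} \<longrightarrow> ereal (l i) < K i (t0 - y i - u))"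
  proof
    fix i assume i: "i \<in> {1..n}"
    obtain d where d: "d > 0" "\<forall>u\<in>{-1..1}. \<bar>u - (t0 - y i)\<bar> < d \<longrightarrow> ereal (l i) < K i u"
      using cont_lower[OF kf[OF i] t0yr[OF i]] l i by blast
    show "\<exists>d>0. \<forall>u::real. \<bar>u\<bar> < d \<longrightarrow>
          (t0 - y i - u \<in> {-1..1} \<longrightarrow> ereal (l i) < K i (t0 - y i - u))"
      by (rule exI[of _ d]) (use d in auto)
  qed
  note pre = this
  obtain d1 where d1: "d1 > 0" "\<forall>i\<in>{1..n}. \<forall>u::real. \<bar>u\<bar> < d1 \<longrightarrow>
          (t0 - y i - u \<in> {-1..1} \<longrightarrow> ereal (l i) < K i (t0 - y i - u))"
    using fin_delta[OF finite_atLeastAtMost pre] by blast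
  define Lw where "Lw = jt + (\<Sum>i\<in>{1..n}. l i)"
  define L where "L = Lw - C - 1"
  have "\<forall>k\<in>{1..n}. \<exists>d>0. \<forall>u::real. \<bar>u\<bar> < d \<longrightarrow> (u \<in> {-1..1} \<longrightarrow> K k u < ereal L)"
  proof
    fix k assume k: "k \<in> {1..n}"
    obtain d where d: "d > 0" "\<forall>u\<in>{-1..1}. \<bar>u - 0\<bar> < d \<longrightarrow> K k u < ereal L"
      using cont_upper[OF kf[OF k], of 0 L] k0[OF k] by auto
    show "\<exists>d>0. \<forall>u::real. \<bar>u\<bar> < d \<longrightarrow> (u \<in> {-1..1} \<longrightarrow> K k u < ereal L)"
      by (rule exI[of _ d]) (use d in auto)
  qed
  note pre = this
  obtain \<eta> where eta: "\<eta> > 0" "\<forall>k\<in>{1..n}. \<forall>u::real. \<bar>u\<bar> < \<eta> \<longrightarrow> (u \<in> {-1..1} \<longrightarrow> K k u < ereal L)"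
    using fin_delta[OF finite_atLeastAtMost pre] by blast
  have "\<forall>i\<in>{1..n}. \<exists>d>0. \<forall>u::real. \<bar>u\<bar> < d \<longrightarrow> t0 - y i \<noteq> u"
  proof
    fix i assume i: "i \<in> {1..n}"
    show "\<exists>d>0. \<forall>u::real. \<bar>u\<bar> < d \<longrightarrow> t0 - y i \<noteq> u"
      by (rule exI[of _ "\<bar>t0 - y i\<bar>"]) (use t0y[OF i] in auto)
  qed
  note pre = this
  obtain d0 where d0: "d0 > 0" "\<forall>i\<in>{1..n}. \<forall>u::real. \<bar>u\<bar> < d0 \<longrightarrow> t0 - y i \<noteq> u"
    using fin_delta[OF finite_atLeastAtMost pre] by blast
  have d0': "\<bar>t0 - y i\<bar> \<ge> d0" if "i \<in> {1..n}" for i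
    using d0(2) that by force
  define \<epsilon> where "\<epsilon> = min (\<eta>/2) d0"
  define \<delta> where "\<delta> = min (d1/2) (\<epsilon>/2)"
  have eps: "\<epsilon> > 0" "\<epsilon> \<le> \<eta>/2" "\<epsilon> \<le> d0" using eta d0 by (auto simp: \<epsilon>_def)
  have del: "\<delta> > 0" "\<delta> < d1" "2 * \<delta> \<le> \<epsilon>" using eps d1 by (auto simp: \<delta>_def)
  define a where "a = (if j = 0 then 0 else y j + \<epsilon>)"
  define b where "b = (if j = n then 1 else y (Suc j) - \<epsilon>)"
  have t0I': "yext n y j \<le> t0" "t0 \<le> yext n y (Suc j)" using t0I unfolding Iint_def by auto
  have at0: "a \<le> t0"
  proof (cases "j = 0")
    case False
    hence j: "j \<in> {1..n}" using assms(4) by auto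
    have "y j \<le> t0" using t0I'(1) yexti[OF j] by simp
    thus ?thesis using d0'[OF j] eps False unfolding a_def by auto
  qed (use t01 a_def in auto)
  have bt0: "t0 \<le> b"
  proof (cases "j = n")
    case False
    hence j: "Suc j \<in> {1..n}" using assms(4) by auto
    have "t0 \<le> y (Suc j)" using t0I'(2) yexti[OF j] by simp
    thus ?thesis using d0'[OF j] eps False unfolding b_def by auto
  qed (use t01 b_def in auto)
  have a0: "0 \<le> a" unfolding a_def using yr eps assms(4) by auto
  have b1: "b \<le> 1"
  proof (cases "j = n")
    case False
    hence "Suc j \<in> {1..n}" using assms(4) by auto
    hence "y (Suc j) \<in> {0..1}" using yr by blast
    thus ?thesis using False eps unfolding b_def by auto
  qed (simp add: b_def)
  show ?thesis
  proof (rule exI[of _ \<delta>], rule conjI[OF del(1)], rule exI[of _ a], rule exI[of _ b], intro conjI ballI impI)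
    show "a \<le> b" using at0 bt0 by simp
    show "{a..b} \<subseteq> {0..1}" using a0 b1 by auto
    fix x assume x: "x \<in> Sbar n" and xy: "\<forall>i\<in>{1..n}. \<bar>x i - y i\<bar> \<le> \<delta>"
    have xr': "\<forall>i\<in>{1..n}. x i \<in> {0..1}" using xr[OF x] .
    have ax: "yext n x j \<le> a"
    proof (cases "j = 0")
      case False
      hence j: "j \<in> {1..n}" using assms(4) by auto
      have "\<bar>x j - y j\<bar> \<le> \<delta>" using xy j by blast
      thus ?thesis using del eps False unfolding a_def yexti[OF j] by auto
    qed (simp add: a_def yext0)
    have bx: "b \<le> yext n x (Suc j)"
    proof (cases "j = n")
      case False
      hence j: "Suc j \<in> {1..n}" using assms(4) by auto
      have "\<bar>x (Suc j) - y (Suc j)\<bar> \<le> \<delta>" using xy j by blast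
      thus ?thesis using del eps False unfolding b_def yexti[OF j] by auto
    qed (simp add: b_def yextn)
    show WI: "{a..b} \<subseteq> Iint n x j" using ax bx unfolding Iint_def by auto
  { fix t i assume t: "t \<in> {a..b}" and i: "i \<in> {1..n}"
    show "\<delta> \<le> \<bar>t - x i\<bar>"
    proof (cases "i \<le> j")
      case True
      hence j: "j \<in> {1..n}" "j \<noteq> 0" using i assms(4) by auto
      have "yext n x i \<le> yext n x j" using sbar_mono[OF x True] assms(4) by auto
      hence "x i \<le> x j" using yexti[OF i] yexti[OF j(1)] by simp
      moreover have "a = y j + \<epsilon>" using j a_def by simp
      moreover have "\<bar>x j - y j\<bar> \<le> \<delta>" using xy j by blast
      ultimately show ?thesis using t del by auto
    next
      case False
      hence j: "Suc j \<in> {1..n}" "j \<noteq> n" using i assms(4) by auto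
      have "yext n x (Suc j) \<le> yext n x i" using sbar_mono[OF x] False i by auto
      hence "x (Suc j) \<le> x i" using yexti[OF i] yexti[OF j(1)] by simp
      moreover have "b = y (Suc j) - \<epsilon>" using j b_def by simp
      moreover have "\<bar>x (Suc j) - y (Suc j)\<bar> \<le> \<delta>" using xy j by blast
      ultimately show ?thesis using t del by auto
    qed
  }
    have Fx0: "ereal Lw \<le> Ffun n J K x t0"
      unfolding Lw_def
    proof (rule F_lb)
      show "ereal jt \<le> J t0" using jt by simp
      show "\<forall>i\<in>{1..n}. ereal (l i) \<le> K i (t0 - x i)"
      proof
        fix i assume i: "i \<in> {1..n}"
        have "\<bar>x i - y i\<bar> \<le> \<delta>" using xy i by blast
        hence "\<bar>x i - y i\<bar> < d1" using del by auto
        moreover have "x i \<in> {0..1}" using xr' i by blast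
        hence "t0 - y i - (x i - y i) \<in> {-1..1}" using t01 by auto
        ultimately have "ereal (l i) < K i (t0 - y i - (x i - y i))" using d1(2) i by blast
        thus "ereal (l i) \<le> K i (t0 - x i)" by simp
      qed
    qed
    have t0W: "t0 \<in> {a..b}" using at0 bt0 by simp
    have small: "Ffun n J K x t < ereal Lw" if k: "k \<in> {1..n}" and t: "t \<in> {0..1}"
      and tk: "\<bar>t - x k\<bar> < \<eta>" for k t
    proof -
      have "x k \<in> {0..1}" using xr' k by blast
      hence "t - x k \<in> {-1..1}" using t by auto
      hence Kk: "K k (t - x k) < ereal L" using eta(2) k tk by blast
      have "Ffun n J K x t \<le> ereal C + K k (t - x k)"
        using F_ub[OF KB B0 xr' t k] MJ t unfolding C_def by simp
      also have "\<dots> < ereal C + ereal L" using Kk by (intro ereal_less_add) auto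
      also have "\<dots> \<le> ereal Lw" unfolding L_def by simp
      finally show ?thesis .
    qed
    have Ix: "Iint n x j \<subseteq> {0..1}"
    proof -
      have "yext n x 0 \<le> yext n x j" "yext n x (Suc j) \<le> yext n x (Suc n)"
        using sbar_mono[OF x] assms(4) by auto
      thus ?thesis unfolding Iint_def yext0 yextn by auto
    qed
    show "mval n J K x j = (SUP t\<in>{a..b}. Ffun n J K x t)"
    proof (rule antisym)
      show "(SUP t\<in>{a..b}. Ffun n J K x t) \<le> mval n J K x j"
        unfolding mval_def using WI by (intro SUP_subset_mono) auto
      show "mval n J K x j \<le> (SUP t\<in>{a..b}. Ffun n J K x t)"
        unfolding mval_def
      proof (rule SUP_least)
        fix t assume tI: "t \<in> Iint n x j"
        have t1: "t \<in> {0..1}" using tI Ix by auto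
        have tI': "yext n x j \<le> t" "t \<le> yext n x (Suc j)" using tI unfolding Iint_def by auto
        show "Ffun n J K x t \<le> (SUP t\<in>{a..b}. Ffun n J K x t)"
        proof (cases "t \<in> {a..b}")
          case True
          thus ?thesis by (rule SUP_upper)
        next
          case False
          have "Ffun n J K x t < ereal Lw"
          proof (cases "t < a")
            case True
            have j: "j \<noteq> 0"
            proof
              assume j0: "j = 0"
              hence "yext n x j = 0" "a = 0" using yext0 a_def by auto
              thus False using True tI' by auto
            qed
            hence jn: "j \<in> {1..n}" using assms(4) by auto
            have "x j \<le> t" using tI'(1) yexti[OF jn] by simp
            moreover have "\<bar>x j - y j\<bar> \<le> \<delta>" using xy jn by blast
            moreover have "a = y j + \<epsilon>" using j a_def by simp
            ultimately have "\<bar>t - x j\<bar> < \<eta>" using True del eps by auto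
            thus ?thesis using small[OF jn t1] by simp
          next
            case False
            hence tb: "b < t" using \<open>t \<notin> {a..b}\<close> by auto
            have j: "j \<noteq> n"
            proof
              assume j0: "j = n"
              hence "yext n x (Suc j) = 1" "b = 1" using yextn b_def by auto
              thus False using tb tI' by auto
            qed
            hence jn: "Suc j \<in> {1..n}" using assms(4) by auto
            have "t \<le> x (Suc j)" using tI'(2) yexti[OF jn] by simp
            moreover have "\<bar>x (Suc j) - y (Suc j)\<bar> \<le> \<delta>" using xy jn by blast
            moreover have "b = y (Suc j) - \<epsilon>" using j b_def by simp
            ultimately have "\<bar>t - x (Suc j)\<bar> < \<eta>" using tb del eps by auto
            thus ?thesis using small[OF jn t1] by simp
          qed
          also have "\<dots> \<le> Ffun n J K x t0" by (rule Fx0)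
          also have "\<dots> \<le> (SUP t\<in>{a..b}. Ffun n J K x t)" using t0W by (rule SUP_upper)
          finally show ?thesis by simp
        qed
      qed
    qed
  qed
qed

end
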